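(* For every $n\ge1$: $F^{\mathrm{(per)}}_{2n}(-1)=0$ if $n$ is even, and $F^{\mathrm{(per)}}_{2n}(-1)=-\dfrac{\mathrm{AV}_n^2}{\mathrm{A}_n}$ if $n$ is odd.
   Context: $F^{\mathrm{(per)}}_{2n}(x) = \sum_{k=1}^n \binom{n+k-2}{k-1}\frac{(2n-1)!\,(2n-k-1)! }{(3 n-2)!\,(n-k)!}x^k$ (boundary loop generating function of the periodic Temperley–Lieb loop model at loop weight 1, size $2n$). $\mathrm{A}_n=\prod_{j=0}^{n-1}\frac{(3j+1)!}{(n+j)!}$ (number of $n\times n$ alternating sign matrices), and for $m\ge0$, $\mathrm{AV}_{2m+1}=\prod_{j=0}^{m-1}(3j+2)\frac{(6j+3)!\,(2j+1)!}{(4j+3)!\,(4j+2)!}$ (number of vertically symmetric alternating sign matrices of size $2m+1$). *)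

theory Defs
  imports Complex_Main
begin

text \<open>Boundary loop generating function of the periodic TL loop model, size 2n:
  F_per n x = F^(per)_{2n}(x).\<close>
definition F_per :: "nat \<Rightarrow> real \<Rightarrow> real" where
  "F_per n x = (\<Sum>k=1..n. real ((n + k - 2) choose (k - 1)) *
      (fact (2*n - 1) * fact (2*n - k - 1)) / (fact (3*n - 2) * fact (n - k)) * x ^ k)"

definition ASM :: "nat \<Rightarrow> real" where
  "ASM n = (\<Prod>j<n. fact (3*j + 1) / fact (n + j))"

text \<open>AV_odd m = AV_{2m+1}, number of vertically symmetric ASMs of size 2m+1.\<close>
definition AV_odd :: "nat \<Rightarrow> real" where
  "AV_odd m = (\<Prod>j<m. real (3*j + 2) * (fact (6*j + 3) * fact (2*j + 1))
                      / (fact (4*j + 3) * fact (4*j + 2)))"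

end

theory Submission
  imports Defs "HOL-Computational_Algebra.Formal_Power_Series"
begin


lemma Bcoef: "fps_nth (fps_binomial (- of_nat (m+1) :: real)) j = (-1)^j * real ((m+j) choose j)"
proof -
  have "fps_nth (fps_binomial (- of_nat (m+1) :: real)) j = (- of_nat (m+1)) gchoose j" by simp
  also have "\<dots> = (-1)^j * ((of_nat (m+1) + of_nat j - 1) gchoose j)"
    by (rule gbinomial_minus)
  also have "(of_nat (m+1) + of_nat j - 1 :: real) = of_nat (m+j)" by simp
  finally show ?thesis by (simp add: binomial_gbinomial)
qed

lemma Binv: "fps_binomial (- of_nat (m+1) :: real) * (1 + fps_X)^(m+1) = 1"
proof -
  have "fps_binomial (- of_nat (m+1) :: real) * fps_binomial (of_nat (m+1)) = fps_binomial (- of_nat (m+1) + of_nat (m+1))"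
    by (rule fps_binomial_add_mult[symmetric])
  also have "\<dots> = 1" by simp
  finally show ?thesis by (simp only: fps_binomial_of_nat)
qed

lemma compose_inv:
  assumes c0: "fps_nth (c::real fps) 0 = 0"
  shows "(fps_binomial (- of_nat (m+1) :: real) oo c) * (1 + c)^(m+1) = 1"
proof -
  have "(fps_binomial (- of_nat (m+1) :: real) * (1 + fps_X)^(m+1)) oo c = 1"
    unfolding Binv[of m] by (rule fps_compose_1)
  moreover have "(fps_binomial (- of_nat (m+1) :: real) * (1 + fps_X)^(m+1)) oo c
     = (fps_binomial (- of_nat (m+1) :: real) oo c) * ((1 + fps_X)^(m+1) oo c)"
    by (rule fps_compose_mult_distrib[OF c0])
  moreover have "(1 + fps_X)^(m+1) oo c = ((1 + fps_X) oo c)^(m+1)"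
    by (rule fps_compose_power[OF c0, symmetric])
  moreover have "(1 + fps_X) oo c = 1 + c"
    using c0 by (simp add: fps_compose_add_distrib)
  ultimately show ?thesis by simp
qed

lemma negpow: "(- f :: real fps)^i = fps_const ((-1)^i) * f^i"
proof -
  have "(- f :: real fps) = fps_const (-1) * f" by (metis fps_const_1_eq_1 fps_const_neg mult_minus_left mult_1)
  then have "(- f :: real fps)^i = fps_const (-1) ^ i * f^i" by (simp only: power_mult_distrib)
  also have "fps_const (-1) ^ i = fps_const ((-1::real)^i)" by (rule fps_const_power)
  finally show ?thesis .
qed

lemma negX_pow: "fps_nth ((- fps_X :: real fps)^i) n = (if i = n then (-1)^n else 0)"
  unfolding negpow fps_mult_left_const_nth fps_X_power_nth by simp

lemma negX2_pow: "fps_nth ((- (fps_X ^ 2) :: real fps)^i) n = (if n = 2*i then (-1)^i else 0)"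
  unfolding negpow fps_mult_left_const_nth power_mult[symmetric] fps_X_power_nth by (simp add: mult.commute)

lemma comp1: "fps_nth (a oo (- fps_X :: real fps)) n = (-1)^n * fps_nth a n"
proof -
  have "fps_nth (a oo (- fps_X :: real fps)) n = (\<Sum>i=0..n. if i = n then fps_nth a i * (-1)^n else 0)"
    unfolding fps_compose_nth by (intro sum.cong) (auto simp: negX_pow)
  also have "\<dots> = (-1)^n * fps_nth a n" by (simp add: sum.delta')
  finally show ?thesis .
qed

lemma comp2: "fps_nth (a oo (- (fps_X ^ 2) :: real fps)) n = (if even n then (-1)^(n div 2) * fps_nth a (n div 2) else 0)"
proof -
  have "fps_nth (a oo (- (fps_X ^ 2) :: real fps)) n = (\<Sum>i=0..n. if n = 2*i then fps_nth a i * (-1)^i else 0)"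
    unfolding fps_compose_nth by (intro sum.cong) (auto simp: negX2_pow)
  also have "\<dots> = (\<Sum>i=0..n. if i = n div 2 \<and> even n then fps_nth a i * (-1)^i else 0)"
    by (intro sum.cong) auto
  also have "\<dots> = (if even n then (-1)^(n div 2) * fps_nth a (n div 2) else 0)"
    by (cases "even n") (auto simp: sum.delta')
  finally show ?thesis .
qed

lemma fps_identity:
  "(fps_binomial (- of_nat (m+1) :: real)) * (fps_binomial (- of_nat (m+1) :: real) oo - fps_X)
   = fps_binomial (- of_nat (m+1) :: real) oo - (fps_X ^ 2)"
proof -
  define B where "B = fps_binomial (- of_nat (m+1) :: real)"
  define P where "P = (1 + - (fps_X ^ 2) :: real fps) ^ (m+1)"
  have e1: "B * (1 + fps_X)^(m+1) = 1" unfolding B_def by (rule Binv)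
  have e2: "(B oo - fps_X) * (1 + - fps_X)^(m+1) = 1" unfolding B_def by (rule compose_inv) simp
  have e3: "(B oo - (fps_X ^ 2)) * P = 1" unfolding B_def P_def by (rule compose_inv) simp
  have "P = ((1 + fps_X) * (1 + - fps_X))^(m+1)" unfolding P_def
    by (simp add: algebra_simps power2_eq_square)
  also have "\<dots> = (1 + fps_X)^(m+1) * (1 + - fps_X)^(m+1)" by (rule power_mult_distrib)
  finally have Peq: "P = (1 + fps_X)^(m+1) * (1 + - fps_X)^(m+1)" .
  have "(B * (B oo - fps_X)) * P = (B * (1 + fps_X)^(m+1)) * ((B oo - fps_X) * (1 + - fps_X)^(m+1))"
    unfolding Peq by (simp only: ac_simps)
  also have "\<dots> = 1" using e1 e2 by simp
  finally have "(B * (B oo - fps_X)) * P = (B oo - (fps_X ^ 2)) * P" using e3 by simp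
  moreover have "P \<noteq> 0"
  proof
    assume "P = 0" then show False using e3 by simp
  qed
  ultimately show ?thesis unfolding B_def by simp
qed

definition Tsum :: "nat \<Rightarrow> real" where
  "Tsum m = (\<Sum>j=0..m. (-1)^j * real ((m+j) choose j) * real ((2*m-j) choose (m-j)))"

lemma sq1: "(-1::real)^k * (-1)^k = 1"
  by (simp flip: power_mult_distrib)

lemma t2: "(-1)^j * real x * ((-1::real)^k * ((-1)^k * real y)) = (-1)^j * real x * real y"
  using sq1[of k] by (simp add: mult.assoc[symmetric])

lemma t3: "(-1::real)^k * ((-1)^k * real y) = real y"
  using sq1[of k] by (simp add: mult.assoc[symmetric])

lemma Tsum_closed: "Tsum m = (if even m then real ((m + m div 2) choose (m div 2)) else 0)"
proof -
  define B where "B = fps_binomial (- of_nat (m+1) :: real)"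
  have "fps_nth (B * (B oo - fps_X)) m = fps_nth (B oo - (fps_X ^ 2)) m"
    unfolding B_def by (simp only: fps_identity)
  moreover have "fps_nth (B * (B oo - fps_X)) m = Tsum m"
    unfolding fps_mult_nth Tsum_def comp1 B_def Bcoef
  proof (intro sum.cong refl)
    fix j assume "j \<in> {0..m}"
    then have j: "j \<le> m" by simp
    then have e: "m + (m - j) = 2*m - j" by simp
    show "(-1)^j * real ((m+j) choose j) * ((-1)^(m-j) * ((-1)^(m-j) * real ((m + (m-j)) choose (m-j))))
       = (-1)^j * real ((m+j) choose j) * real ((2*m-j) choose (m-j))"
      unfolding e by (rule t2)
  qed
  moreover have "fps_nth (B oo - (fps_X ^ 2)) m = (if even m then real ((m + m div 2) choose (m div 2)) else 0)"
    unfolding comp2 B_def Bcoef t3 ..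
  ultimately show ?thesis by simp
qed

lemma aux: "(b::real) \<noteq> 0 \<Longrightarrow> c \<noteq> 0 \<Longrightarrow> x * (a * (c * d * y)) / (b * c) * (-1)^Suc j = - (a * d / b) * ((-1)^j * x * y)"
  by (simp add: field_simps)

lemma aux2: "B \<noteq> 0 \<Longrightarrow> (a::real) * B / c * (d / (e * B)) = a * d / (c * e)"
  by (simp add: field_simps)

lemma F_per_Tsum: "F_per (m+1) (-1) = - (fact (2*m+1) * fact m / fact (3*m+1)) * Tsum m"
proof -
  have "F_per (m+1) (-1) = (\<Sum>j=0..m. real ((m + 1 + Suc j - 2) choose (Suc j - 1)) *
      (fact (2*(m+1) - 1) * fact (2*(m+1) - Suc j - 1)) / (fact (3*(m+1) - 2) * fact (m + 1 - Suc j)) * (-1) ^ Suc j)"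
  proof -
    have I: "{1..m+1} = {Suc 0..Suc m}" by simp
    show ?thesis unfolding F_per_def I sum.shift_bounds_cl_Suc_ivl ..
  qed
  also have "\<dots> = (\<Sum>j=0..m. - (fact (2*m+1) * fact m / fact (3*m+1)) *
       ((-1)^j * real ((m+j) choose j) * real ((2*m-j) choose (m-j))))"
  proof (intro sum.cong refl)
    fix j assume "j \<in> {0..m}"
    then have j: "j \<le> m" by simp
    have fl: "(fact (2*m - j) :: real) = fact (m-j) * fact m * real ((2*m-j) choose (m-j))"
    proof -
      have "fact (m-j) * fact (2*m-j - (m-j)) * ((2*m-j) choose (m-j)) = (fact (2*m-j) :: nat)"
        by (rule binomial_fact_lemma) (use j in simp)
      moreover have "2*m-j - (m-j) = m" using j by simp
      ultimately have "fact (m-j) * fact m * ((2*m-j) choose (m-j)) = (fact (2*m-j) :: nat)" by simp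
      then have "real (fact (m-j) * fact m * ((2*m-j) choose (m-j))) = real (fact (2*m-j))" by simp
      then show ?thesis by (simp add: of_nat_fact)
    qed
    have a: "m + 1 + Suc j - 2 = m + j" "Suc j - 1 = j" "2*(m+1) - 1 = 2*m+1"
      "2*(m+1) - Suc j - 1 = 2*m - j" "3*(m+1) - 2 = 3*m+1" "m + 1 - Suc j = m - j" by auto
    have nz: "(fact (m-j) :: real) \<noteq> 0" "(fact (3*m+1) :: real) \<noteq> 0" by auto
    show "real ((m + 1 + Suc j - 2) choose (Suc j - 1)) *
      (fact (2*(m+1) - 1) * fact (2*(m+1) - Suc j - 1)) / (fact (3*(m+1) - 2) * fact (m + 1 - Suc j)) * (-1) ^ Suc j
      = - (fact (2*m+1) * fact m / fact (3*m+1)) *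
       ((-1)^j * real ((m+j) choose j) * real ((2*m-j) choose (m-j)))"
      unfolding a fl by (rule aux[OF nz(2) nz(1)])
  qed
  also have "\<dots> = - (fact (2*m+1) * fact m / fact (3*m+1)) * Tsum m"
    unfolding Tsum_def by (simp only: sum_distrib_left)
  finally show ?thesis .
qed


lemma aux3: "(Dn::real) \<noteq> 0 \<Longrightarrow> A \<noteq> 0 \<Longrightarrow> B \<noteq> 0 \<Longrightarrow> c \<noteq> 0 \<Longrightarrow>
   Nn * F / (Dn * A * B / c) = Nn / Dn * (F * c / (A * B))"
  by (simp add: field_simps)

lemma ASM_Suc: "ASM (Suc n) = ASM n * (fact (3*n+1) * fact n / (fact (2*n) * fact (2*n+1)))"
proof -
  define N where "N k = (\<Prod>j<k. (fact (3*j+1) :: real))" for k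
  define D where "D k = (\<Prod>j<k. (fact (k+j) :: real))" for k
  have A: "ASM k = N k / D k" for k unfolding ASM_def N_def D_def by (rule prod_dividef)
  have "(\<Prod>j<Suc (Suc n). (fact (n+j) :: real)) = fact (n+0) * (\<Prod>j<Suc n. fact (n + Suc j))"
    by (rule prod.lessThan_Suc_shift)
  also have "\<dots> = fact n * D (Suc n)" unfolding D_def by (simp only: add_Suc_right add_Suc add_0_right)
  finally have 1: "(\<Prod>j<Suc (Suc n). (fact (n+j) :: real)) = fact n * D (Suc n)" .
  have 3: "(\<Prod>j<Suc (Suc n). (fact (n+j) :: real)) = D n * fact (n+n) * fact (n + Suc n)"
    unfolding D_def by (simp only: prod.lessThan_Suc)
  have 4: "n + n = 2*n" "n + Suc n = 2*n+1" by simp_all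
  have 2: "fact n * D (Suc n) = D n * fact (2*n) * fact (2*n+1)" using 1 3 unfolding 4 by simp
  have DD: "D (Suc n) = D n * fact (2*n) * fact (2*n+1) / fact n"
    using 2 by (simp add: nonzero_eq_divide_eq mult.commute)
  have NN: "N (Suc n) = N n * fact (3*n+1)" unfolding N_def by (simp only: prod.lessThan_Suc)
  have "D n \<noteq> 0" unfolding D_def by simp
  then show ?thesis unfolding A NN DD by (rule aux3) simp_all
qed
lemma ASM_Suc': "a = 3*k+1 \<Longrightarrow> b = 2*k \<Longrightarrow> c = 2*k+1 \<Longrightarrow> k' = k \<Longrightarrow> ASM (Suc k) = ASM k * (fact a * fact k' / (fact b * fact c))"
  using ASM_Suc by simp

definition Rc :: "nat \<Rightarrow> real" where
  "Rc p = fact (4*p+1) * fact (3*p) / (fact (6*p+1) * fact p)"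

lemma AV_Suc: "AV_odd (Suc m) = AV_odd m * (real (3*m + 2) * (fact (6*m + 3) * fact (2*m + 1))
                      / (fact (4*m + 3) * fact (4*m + 2)))"
  unfolding AV_odd_def by simp

lemma idl:
  fixes a b c d e f g h F4 F6 F3 Fp F2 :: real
  assumes "a > 0" "b > 0" "c > 0" "d > 0" "e > 0" "f > 0" "g > 0" "h > 0" "F4 > 0" "F6 > 0" "F3 > 0" "Fp > 0" "F2 > 0"
  shows "(f*(4*a)*e*(2*d)*F4)*((3*a)*b*c*F3)/((g*(6*a)*h*(2*b)*(3*d)*(2*c)*F6)*(a*Fp))
     * (((2*b)*(3*d)*(2*c)*F6)*F2/(((2*d)*F4)*(e*(2*d)*F4)))
     * ((g*(6*a)*h*(2*b)*(3*d)*(2*c)*F6)*((2*a)*F2)/(((4*a)*e*(2*d)*F4)*(f*(4*a)*e*(2*d)*F4)))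
   = F4*F3/(F6*Fp) * (b*(((3*d)*(2*c)*F6)*F2)/((e*(2*d)*F4)*((2*d)*F4)))^2"
  using assms by (simp add: field_simps power2_eq_square)

lemma key: "Rc p * ASM (2*p+1) = AV_odd p ^ 2"
proof (induction p)
  case 0
  then show ?case by (simp add: Rc_def ASM_def AV_odd_def)
next
  case (Suc p)
  have a1: "2*Suc p+1 = Suc (Suc (2*p+1))" by simp
  have AS: "ASM (2*Suc p+1) = ASM (2*p+1) * (fact (6*p+4) * fact (2*p+1) / (fact (4*p+2) * fact (4*p+3)))
     * (fact (6*p+7) * fact (2*p+2) / (fact (4*p+4) * fact (4*p+5)))"
  proof -
    have e1: "ASM (Suc (Suc (2*p+1))) = ASM (Suc (2*p+1)) * (fact (6*p+7) * fact (2*p+2) / (fact (4*p+4) * fact (4*p+5)))"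
      by (rule ASM_Suc') simp_all
    have e2: "ASM (Suc (2*p+1)) = ASM (2*p+1) * (fact (6*p+4) * fact (2*p+1) / (fact (4*p+2) * fact (4*p+3)))"
      by (rule ASM_Suc') simp_all
    show ?thesis unfolding a1 e1 e2 ..
  qed
  define a where "a = real p + 1"
  define b where "b = 3 * real p + 2"
  define c where "c = 3 * real p + 1"
  define d where "d = 2 * real p + 1"
  define e where "e = 4 * real p + 3"
  define f where "f = 4 * real p + 5"
  define g where "g = 6 * real p + 7"
  define h where "h = 6 * real p + 5"
  have pos: "a > 0" "b > 0" "c > 0" "d > 0" "e > 0" "f > 0" "g > 0" "h > 0"
    unfolding a_def b_def c_def d_def e_def f_def g_def h_def by simp_all
  have f1: "(fact (4*p+5)::real) = f*(4*a)*e*(2*d)*fact(4*p+1)"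
    "(fact (4*p+4)::real) = (4*a)*e*(2*d)*fact(4*p+1)"
    "(fact (4*p+3)::real) = e*(2*d)*fact(4*p+1)"
    "(fact (4*p+2)::real) = (2*d)*fact(4*p+1)"
    "(fact (6*p+7)::real) = g*(6*a)*h*(2*b)*(3*d)*(2*c)*fact(6*p+1)"
    "(fact (6*p+4)::real) = (2*b)*(3*d)*(2*c)*fact(6*p+1)"
    "(fact (6*p+3)::real) = (3*d)*(2*c)*fact(6*p+1)"
    "(fact (3*p+3)::real) = (3*a)*b*c*fact(3*p)"
    "(fact (2*p+2)::real) = (2*a)*fact(2*p+1)"
    "(fact (p+1)::real) = a*fact p"
    "real (3*p+2) = b"
    unfolding a_def b_def c_def d_def e_def f_def g_def h_def
    by (simp_all add: fact_Suc eval_nat_numeral algebra_simps)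
  have RR: "Rc (Suc p) = fact (4*p+5) * fact (3*p+3) / (fact (6*p+7) * fact (p+1))"
  proof -
    have "4*Suc p+1 = 4*p+5" "3*Suc p = 3*p+3" "6*Suc p+1 = 6*p+7" "Suc p = p+1" by simp_all
    then show ?thesis unfolding Rc_def by metis
  qed
  have id: "Rc (Suc p) * (fact (6*p+4) * fact (2*p+1) / (fact (4*p+2) * fact (4*p+3)))
     * (fact (6*p+7) * fact (2*p+2) / (fact (4*p+4) * fact (4*p+5)))
     = Rc p * (real (3*p + 2) * (fact (6*p + 3) * fact (2*p + 1)) / (fact (4*p + 3) * fact (4*p + 2)))^2"
    unfolding RR unfolding Rc_def f1 by (rule idl) (use pos in simp_all)
  have "Rc (Suc p) * ASM (2*Suc p+1) = Rc p * ASM (2*p+1) *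
     (real (3*p + 2) * (fact (6*p + 3) * fact (2*p + 1)) / (fact (4*p + 3) * fact (4*p + 2)))^2"
  proof -
    have "Rc (Suc p) * ASM (2*Suc p+1) = ASM (2*p+1) * (Rc (Suc p) * (fact (6*p+4) * fact (2*p+1) / (fact (4*p+2) * fact (4*p+3)))
     * (fact (6*p+7) * fact (2*p+2) / (fact (4*p+4) * fact (4*p+5))))"
      unfolding AS by (simp only: ac_simps)
    also have "\<dots> = ASM (2*p+1) * (Rc p * (real (3*p + 2) * (fact (6*p + 3) * fact (2*p + 1)) / (fact (4*p + 3) * fact (4*p + 2)))^2)"
      unfolding id ..
    finally show ?thesis by (simp only: ac_simps)
  qed
  also have "\<dots> = AV_odd (Suc p) ^ 2" unfolding Suc.IH AV_Suc by (simp only: power_mult_distrib)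
  finally show ?case .
qed
lemma ASM_pos: "ASM n > 0"
  unfolding ASM_def by (intro prod_pos) auto

theorem mainTheorem4:
  fixes n :: nat
  assumes "n \<ge> 1"
  shows "(even n \<longrightarrow> F_per n (-1) = 0) \<and>
         (odd n \<longrightarrow> F_per n (-1) = - ((AV_odd ((n - 1) div 2)) ^ 2 / ASM n))"
proof -
  obtain m where nm: "n = m + 1" using assms by (metis add.commute le_Suc_ex)
  have F: "F_per n (-1) = - (fact (2*m+1) * fact m / fact (3*m+1)) * Tsum m"
    unfolding nm by (rule F_per_Tsum)
  show ?thesis
  proof (intro conjI impI)
    assume "even n"
    then have "odd m" using nm by simp
    then show "F_per n (-1) = 0" unfolding F Tsum_closed by simp
  next
    assume "odd n"
    then obtain p where mp: "m = 2*p" using nm by (metis dvd_def even_add odd_one)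
    have T: "Tsum (2*p) = real ((3*p) choose p)" unfolding Tsum_closed by simp
    have C: "real ((3*p) choose p) = fact (3*p) / (fact p * fact (2*p))"
      by (subst binomial_fact) auto
    have e: "2*(2*p)+1 = 4*p+1" "3*(2*p)+1 = 6*p+1" by simp_all
    have R: "fact (2*m+1) * fact m / fact (3*m+1) * Tsum m = Rc p"
      unfolding mp T C Rc_def e by (rule aux2) simp
    have np: "(n - 1) div 2 = p" "n = 2*p+1" using nm mp by auto
    have "Rc p = AV_odd p ^ 2 / ASM (2*p+1)" using key[of p] ASM_pos[of "2*p+1"]
      by (simp add: field_simps)
    then show "F_per n (-1) = - ((AV_odd ((n - 1) div 2)) ^ 2 / ASM n)"
      using F R np by simp
  qed
qed

end
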